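(* Let $G=(V,E)$ be an undirected graph with layers $L_0, L_1, L_2, L_{\geq 2}$ and quantities $d^+, d^-, rs$ as in the context, and let $0<\varepsilon<1$. Let $\bar\ell_{\geq 2}$ be the output of the procedure Estimate-Periphery-Size (see context) run with $$s_1 = \Theta\!\left(\frac{d^+_{\max}(L_1)}{\varepsilon^2\, d^+_{avg}(L_1)}\right), \qquad s_{\geq 2} = \Theta\!\left(\frac{c_{rs}\cdot d^-_{\max}(L_{\geq 2})}{\varepsilon^2\, d^-_{avg}(L_{\geq 2})}\right).$$ Then with high constant probability, $\bar\ell_{\geq 2} \in [(1-\varepsilon)|L_{\geq 2}|, (1+\varepsilon)|L_{\geq 2}|]$.
   Context: Given $L_0 \subseteq V$, let $L_1 = \bigcup_{v\in L_0}N(v)\setminus L_0$, $L_2$ the set of nodes at distance exactly $2$ from $L_0$, and $L_{\geq 2} = V\setminus(L_0\cup L_1)$. For $v\in L_1$, $d^+(v)$ is its number of neighbors in $L_2$; for $v\in L_2$, $d^-(v)$ is its number of neighbors in $L_1$; for $v\in L_{\geq 2}\setminus L_2$, $d^-(v)=0$. For a set $R$: $d^+_{avg}(R) = \frac{1}{|R|}\sum_{v\in R}d^+(v)$, $d^+_{\max}(R)=\max_{v\in R}d^+(v)$, and analogously $d^-_{avg}(R)$, $d^-_{\max}(R)$. Each $v\in L_{\geq 2}$ has a reachability score $rs(v)>0$, and the procedure Reach returns a node of $L_{\geq 2}$ (together with its score) such that each $v\in L_{\geq 2}$ is returned with probability $rs(v)/\sum_{u\in L_{\geq 2}}rs(u)$,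 independently across calls. Let $rs_{avg}(L_{\geq 2}) = \frac{1}{|L_{\geq 2}|}\sum_{v\in L_{\geq 2}}rs(v)$, $rs_{\min}(L_{\geq 2}) = \min_{v\in L_{\geq 2}}rs(v)$, and $c_{rs} = rs_{avg}(L_{\geq 2})/rs_{\min}(L_{\geq 2})$. Estimate-Periphery-Size: draw $s_1$ uniform independent nodes $S_1$ from $L_1$ and set $\bar d^+ = \frac{1}{s_1}\sum_{v\in S_1}d^+(v)$; draw $s_{\geq 2}$ nodes $S_2$ by independent calls to Reach and set $\bar d^- = \left(\sum_{v\in S_2}\frac{d^-(v)}{rs(v)}\right)\big/\left(\sum_{v\in S_2}\frac{1}{rs(v)}\right)$; output $\bar\ell_{\geq 2} = |L_1|\cdot \bar d^+/\bar d^-$. "With high constant probability" means with probability at least a fixed constant close to $1$ (determined by the hidden constants in $\Theta$). *)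

theory Defs
  imports "HOL-Probability.Probability"
begin

definition nbr :: "'a set \<Rightarrow> ('a \<Rightarrow> 'a \<Rightarrow> bool) \<Rightarrow> 'a \<Rightarrow> 'a set" where
  "nbr V E v = {u \<in> V. E v u}"

definition layer1 :: "'a set \<Rightarrow> ('a \<Rightarrow> 'a \<Rightarrow> bool) \<Rightarrow> 'a set \<Rightarrow> 'a set" where
  "layer1 V E L0 = (\<Union>v\<in>L0. nbr V E v) - L0"

definition layer2 :: "'a set \<Rightarrow> ('a \<Rightarrow> 'a \<Rightarrow> bool) \<Rightarrow> 'a set \<Rightarrow> 'a set" where
  "layer2 V E L0 = {v \<in> V - L0 - layer1 V E L0. \<exists>u\<in>layer1 V E L0. E u v}"

definition layer_ge2 :: "'a set \<Rightarrow> ('a \<Rightarrow> 'a \<Rightarrow> bool) \<Rightarrow> 'a set \<Rightarrow> 'a set" where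
  "layer_ge2 V E L0 = V - (L0 \<union> layer1 V E L0)"

definition dplus :: "'a set \<Rightarrow> ('a \<Rightarrow> 'a \<Rightarrow> bool) \<Rightarrow> 'a set \<Rightarrow> 'a \<Rightarrow> nat" where
  "dplus V E L0 v = card {u \<in> layer2 V E L0. E v u}"

text \<open>d^-(v): number of neighbours in L1 (used for v in L_{>=2}; it is 0 outside L2).\<close>
definition dminus :: "'a set \<Rightarrow> ('a \<Rightarrow> 'a \<Rightarrow> bool) \<Rightarrow> 'a set \<Rightarrow> 'a \<Rightarrow> nat" where
  "dminus V E L0 v = card {u \<in> layer1 V E L0. E v u}"

definition avg_of :: "('a \<Rightarrow> real) \<Rightarrow> 'a set \<Rightarrow> real" where
  "avg_of f R = (\<Sum>v\<in>R. f v) / real (card R)"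

definition max_of :: "('a \<Rightarrow> real) \<Rightarrow> 'a set \<Rightarrow> real" where
  "max_of f R = Max (f ` R)"

definition min_of :: "('a \<Rightarrow> real) \<Rightarrow> 'a set \<Rightarrow> real" where
  "min_of f R = Min (f ` R)"

primrec iid_pmf :: "nat \<Rightarrow> 'a pmf \<Rightarrow> 'a list pmf" where
  "iid_pmf 0 p = return_pmf []"
| "iid_pmf (Suc n) p = bind_pmf p (\<lambda>x. map_pmf (\<lambda>xs. x # xs) (iid_pmf n p))"

text \<open>Output of Estimate-Periphery-Size given the samples S1 (from L1) and S2 (from Reach).\<close>
definition periphery_estimate ::
  "'a set \<Rightarrow> ('a \<Rightarrow> 'a \<Rightarrow> bool) \<Rightarrow> 'a set \<Rightarrow> ('a \<Rightarrow> real) \<Rightarrow> 'a list \<Rightarrow> 'a list \<Rightarrow> real" where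
  "periphery_estimate V E L0 rs S1 S2 =
     (let dp = (\<Sum>v\<leftarrow>S1. real (dplus V E L0 v)) / real (length S1);
          dm = (\<Sum>v\<leftarrow>S2. real (dminus V E L0 v) / rs v) / (\<Sum>v\<leftarrow>S2. 1 / rs v)
      in real (card (layer1 V E L0)) * dp / dm)"

end

theory Submission
  imports Defs
begin


lemma integral_bind_pmf_fin:
  fixes f :: "_ \<Rightarrow> real"
  assumes M: "finite (set_pmf M)" and N: "\<And>x. x \<in> set_pmf M \<Longrightarrow> finite (set_pmf (N x))"
  shows "measure_pmf.expectation (bind_pmf M N) f
         = measure_pmf.expectation M (\<lambda>x. measure_pmf.expectation (N x) f)"
proof -
  define B where "B = (\<Union>x\<in>set_pmf M. set_pmf (N x))"
  have fB: "finite B" unfolding B_def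
  proof (rule finite_UN_I)
    show "finite (set_pmf M)" by (rule M)
  next
    fix x assume "x \<in> set_pmf M" then show "finite (set_pmf (N x))" by (rule N)
  qed
  have "measure_pmf.expectation (bind_pmf M N) f = (\<Sum>y\<in>B. f y * pmf (bind_pmf M N) y)"
    by (rule integral_measure_pmf_real[OF fB]) (auto simp: B_def)
  also have "\<dots> = (\<Sum>y\<in>B. f y * (\<Sum>x\<in>set_pmf M. pmf (N x) y * pmf M x))"
    by (intro sum.cong refl, subst pmf_bind, subst integral_measure_pmf_real[OF M]) auto
  also have "\<dots> = (\<Sum>x\<in>set_pmf M. (\<Sum>y\<in>B. f y * pmf (N x) y) * pmf M x)"
    by (simp add: sum_distrib_left sum_distrib_right mult_ac sum.swap[of _ B])
  also have "\<dots> = (\<Sum>x\<in>set_pmf M. measure_pmf.expectation (N x) f * pmf M x)"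
    by (intro sum.cong refl, subst integral_measure_pmf_real[OF fB]) (auto simp: B_def)
  also have "\<dots> = measure_pmf.expectation M (\<lambda>x. measure_pmf.expectation (N x) f)"
    by (rule integral_measure_pmf_real[symmetric]) (auto simp: M)
  finally show ?thesis .
qed

lemma set_iid: "xs \<in> set_pmf (iid_pmf n p) \<Longrightarrow> length xs = n \<and> set xs \<subseteq> set_pmf p"
  by (induction n arbitrary: xs) fastforce+

lemma finite_iid: "finite (set_pmf p) \<Longrightarrow> finite (set_pmf (iid_pmf n p))"
proof -
  assume f: "finite (set_pmf p)"
  have "set_pmf (iid_pmf n p) \<subseteq> {xs. set xs \<subseteq> set_pmf p \<and> length xs = n}"
    using set_iid by blast
  moreover have "finite {xs. set xs \<subseteq> set_pmf p \<and> length xs = n}"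
    using finite_lists_length_eq[OF f] by simp
  ultimately show ?thesis by (rule finite_subset)
qed

lemma iid_Suc_exp:
  fixes g :: "_ \<Rightarrow> real"
  assumes "finite (set_pmf p)"
  shows "measure_pmf.expectation (iid_pmf (Suc n) p) g
     = measure_pmf.expectation p (\<lambda>x. measure_pmf.expectation (iid_pmf n p) (\<lambda>xs. g (x # xs)))"
  using assms by (simp add: integral_bind_pmf_fin finite_iid)

lemma iid_mean:
  fixes f :: "_ \<Rightarrow> real"
  assumes fin: "finite (set_pmf p)"
  shows "measure_pmf.expectation (iid_pmf n p) (\<lambda>xs. \<Sum>v\<leftarrow>xs. f v)
         = real n * measure_pmf.expectation p f"
proof (induction n)
  case 0 then show ?case by simp
next
  case (Suc n)
  have "measure_pmf.expectation (iid_pmf (Suc n) p) (\<lambda>xs. \<Sum>v\<leftarrow>xs. f v)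
     = measure_pmf.expectation p (\<lambda>x. measure_pmf.expectation (iid_pmf n p) (\<lambda>xs. f x + (\<Sum>v\<leftarrow>xs. f v)))"
    by (subst iid_Suc_exp[OF fin]) simp
  also have "\<dots> = measure_pmf.expectation p (\<lambda>x. f x + real n * measure_pmf.expectation p f)"
  proof -
    have "measure_pmf.expectation (iid_pmf n p) (\<lambda>xs. f x + (\<Sum>v\<leftarrow>xs. f v)) = f x + real n * measure_pmf.expectation p f" for x
      by (simp add: integrable_measure_pmf_finite finite_iid fin Suc)
    then show ?thesis by simp
  qed
  also have "\<dots> = real (Suc n) * measure_pmf.expectation p f"
    by (simp add: integrable_measure_pmf_finite fin algebra_simps)
  finally show ?case .
qed

lemma iid_var:
  fixes f :: "_ \<Rightarrow> real"
  assumes fin: "finite (set_pmf p)"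
  defines "\<mu> \<equiv> measure_pmf.expectation p f"
  shows "measure_pmf.expectation (iid_pmf n p) (\<lambda>xs. ((\<Sum>v\<leftarrow>xs. f v) - real n * \<mu>)^2)
         = real n * measure_pmf.expectation p (\<lambda>x. (f x - \<mu>)^2)"
proof (induction n)
  case 0 then show ?case by simp
next
  case (Suc n)
  have I: "integrable (measure_pmf (iid_pmf n p)) h" for h :: "_ \<Rightarrow> real"
    by (simp add: integrable_measure_pmf_finite finite_iid fin)
  have Ip: "integrable (measure_pmf p) h" for h :: "_ \<Rightarrow> real"
    by (simp add: integrable_measure_pmf_finite fin)
  have m0: "measure_pmf.expectation (iid_pmf n p) (\<lambda>xs. (\<Sum>v\<leftarrow>xs. f v) - real n * \<mu>) = 0"
    using iid_mean[OF fin, of n f] by (simp add: I \<mu>_def)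
  have inner: "measure_pmf.expectation (iid_pmf n p)
      (\<lambda>xs. ((\<Sum>v\<leftarrow>x # xs. f v) - real (Suc n) * \<mu>)^2)
      = (f x - \<mu>)^2 + real n * measure_pmf.expectation p (\<lambda>x. (f x - \<mu>)^2)" for x
  proof -
    have e: "((\<Sum>v\<leftarrow>x # xs. f v) - real (Suc n) * \<mu>)^2
       = (f x - \<mu>)^2 + (2 * (f x - \<mu>)) * ((\<Sum>v\<leftarrow>xs. f v) - real n * \<mu>)
         + ((\<Sum>v\<leftarrow>xs. f v) - real n * \<mu>)^2" for xs
      by (simp add: power2_eq_square algebra_simps)
    have "measure_pmf.expectation (iid_pmf n p)
      (\<lambda>xs. ((\<Sum>v\<leftarrow>x # xs. f v) - real (Suc n) * \<mu>)^2) = measure_pmf.expectation (iid_pmf n p)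
      (\<lambda>xs. (f x - \<mu>)^2 + (2 * (f x - \<mu>)) * ((\<Sum>v\<leftarrow>xs. f v) - real n * \<mu>)
         + ((\<Sum>v\<leftarrow>xs. f v) - real n * \<mu>)^2)" by (simp only: e)
    also have "\<dots> = (f x - \<mu>)^2 + (2 * (f x - \<mu>)) * measure_pmf.expectation (iid_pmf n p) (\<lambda>xs. (\<Sum>v\<leftarrow>xs. f v) - real n * \<mu>)
       + measure_pmf.expectation (iid_pmf n p) (\<lambda>xs. ((\<Sum>v\<leftarrow>xs. f v) - real n * \<mu>)^2)"
      by (simp add: I)
    finally show ?thesis by (simp add: m0 Suc)
  qed
  have "measure_pmf.expectation (iid_pmf (Suc n) p) (\<lambda>xs. ((\<Sum>v\<leftarrow>xs. f v) - real (Suc n) * \<mu>)^2)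
     = measure_pmf.expectation p (\<lambda>x. (f x - \<mu>)^2 + real n * measure_pmf.expectation p (\<lambda>x. (f x - \<mu>)^2))"
    by (subst iid_Suc_exp[OF fin]) (simp only: inner)
  also have "\<dots> = real (Suc n) * measure_pmf.expectation p (\<lambda>x. (f x - \<mu>)^2)"
    by (simp add: Ip algebra_simps)
  finally show ?case .
qed


lemma iid_dev:
  fixes f :: "_ \<Rightarrow> real"
  assumes fin: "finite (set_pmf p)" and mu: "\<mu> = measure_pmf.expectation p f" "\<mu> > 0"
    and eta: "\<eta> > 0" and n: "n > 0"
  shows "measure_pmf.prob (iid_pmf n p)
           {xs. xs \<notin> set_pmf (iid_pmf n p) \<or> \<eta> * \<mu> * real n \<le> \<bar>(\<Sum>v\<leftarrow>xs. f v) - real n * \<mu>\<bar>}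
         \<le> measure_pmf.expectation p (\<lambda>x. (f x)^2) / (real n * \<eta>^2 * \<mu>^2)"
proof -
  let ?Q = "iid_pmf n p"
  let ?S = "\<lambda>xs. (\<Sum>v\<leftarrow>xs. f v)"
  have I: "integrable (measure_pmf ?Q) h" for h :: "_ \<Rightarrow> real"
    by (simp add: integrable_measure_pmf_finite finite_iid fin)
  have Ip: "integrable (measure_pmf p) h" for h :: "_ \<Rightarrow> real"
    by (simp add: integrable_measure_pmf_finite fin)
  have ES: "measure_pmf.expectation ?Q ?S = real n * \<mu>" using iid_mean[OF fin] mu by simp
  have a: "\<eta> * \<mu> * real n > 0" using mu eta n by simp
  have "measure_pmf.prob ?Q
           {xs. xs \<notin> set_pmf ?Q \<or> \<eta> * \<mu> * real n \<le> \<bar>?S xs - real n * \<mu>\<bar>}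
        = measure_pmf.prob ?Q ({xs. xs \<notin> set_pmf ?Q \<or> \<eta> * \<mu> * real n \<le> \<bar>?S xs - real n * \<mu>\<bar>} \<inter> set_pmf ?Q)"
    by (simp add: measure_Int_set_pmf)
  also have "\<dots> \<le> measure_pmf.prob ?Q {xs \<in> space (measure_pmf ?Q). \<eta> * \<mu> * real n \<le> \<bar>?S xs - measure_pmf.expectation ?Q ?S\<bar>}"
    by (intro measure_pmf.finite_measure_mono) (auto simp: ES)
  also have "\<dots> \<le> measure_pmf.variance ?Q ?S / (\<eta> * \<mu> * real n)^2"
    by (rule measure_pmf.Chebyshev_inequality) (auto simp: I a)
  also have "measure_pmf.variance ?Q ?S = real n * measure_pmf.expectation p (\<lambda>x. (f x - \<mu>)^2)"
    using iid_var[OF fin, of n f] by (simp add: ES mu)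
  also have "measure_pmf.expectation p (\<lambda>x. (f x - \<mu>)^2) = measure_pmf.expectation p (\<lambda>x. (f x)^2) - \<mu>^2"
  proof -
    have "(\<lambda>x. (f x - \<mu>)^2) = (\<lambda>x. (f x)^2 - 2 * \<mu> * f x + \<mu>^2)"
      by (simp add: power2_eq_square algebra_simps)
    then show ?thesis using mu(1) by (simp add: Ip power2_eq_square)
  qed
  also have "real n * (measure_pmf.expectation p (\<lambda>x. (f x)^2) - \<mu>^2) / (\<eta> * \<mu> * real n)^2
      \<le> real n * measure_pmf.expectation p (\<lambda>x. (f x)^2) / (\<eta> * \<mu> * real n)^2"
    by (intro divide_right_mono) (auto simp: algebra_simps)
  also have "\<dots> = measure_pmf.expectation p (\<lambda>x. (f x)^2) / (real n * \<eta>^2 * \<mu>^2)"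
    using n by (simp add: power2_eq_square field_simps)
  finally show ?thesis .
qed



lemma xyz_bound:
  fixes x y z \<epsilon> :: real
  assumes e: "0 < \<epsilon>" "\<epsilon> < 1"
    and x: "\<bar>x - 1\<bar> < \<epsilon>/5" and y: "\<bar>y - 1\<bar> < \<epsilon>/5" and z: "\<bar>z - 1\<bar> < \<epsilon>/5"
  shows "1 - \<epsilon> \<le> x * z / y \<and> x * z / y \<le> 1 + \<epsilon>"
proof -
  let ?h = "\<epsilon>/5"
  have x1: "1 - ?h < x" "x < 1 + ?h" using x by arith+
  have y1: "1 - ?h < y" "y < 1 + ?h" using y by arith+
  have z1: "1 - ?h < z" "z < 1 + ?h" using z by arith+
  have yp: "y > 0" using y1 e by linarith
  have up: "x * z \<le> (1 + ?h) * (1 + ?h)"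
    using x1 z1 e by (intro mult_mono) auto
  have lo: "(1 - ?h) * (1 - ?h) \<le> x * z"
    using x1 z1 e by (intro mult_mono) auto
  have ee: "\<epsilon> * \<epsilon> < \<epsilon> * 1" using e by (intro mult_strict_left_mono) auto
  have q1: "(1 + ?h) * (1 + ?h) = 1 + 2*\<epsilon>/5 + \<epsilon>*\<epsilon>/25" by (simp add: field_simps)
  have q2: "(1 + \<epsilon>) * (1 - ?h) = 1 + 4*\<epsilon>/5 - \<epsilon>*\<epsilon>/5" by (simp add: field_simps)
  have q3: "(1 - \<epsilon>) * (1 + ?h) = 1 - 4*\<epsilon>/5 - \<epsilon>*\<epsilon>/5" by (simp add: field_simps)
  have q4: "(1 - ?h) * (1 - ?h) = 1 - 2*\<epsilon>/5 + \<epsilon>*\<epsilon>/25" by (simp add: field_simps)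
  have "(1 + ?h) * (1 + ?h) \<le> (1 + \<epsilon>) * (1 - ?h)" unfolding q1 q2 using e ee by linarith
  also have "\<dots> \<le> (1 + \<epsilon>) * y" using y1 e by (intro mult_left_mono) auto
  finally have A: "x * z \<le> (1 + \<epsilon>) * y" using up by linarith
  have "(1 - \<epsilon>) * y \<le> (1 - \<epsilon>) * (1 + ?h)" using y1 e by (intro mult_left_mono) auto
  also have "\<dots> \<le> (1 - ?h) * (1 - ?h)" unfolding q3 q4 using e ee mult_nonneg_nonneg[of \<epsilon> \<epsilon>] by linarith
  finally have B: "(1 - \<epsilon>) * y \<le> x * z" using lo by linarith
  show ?thesis using A B yp by (simp add: divide_le_eq le_divide_eq)
qed

lemma rel_helper:
  fixes A c h :: real
  assumes "c > 0" "\<bar>A - c\<bar> < h * c"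
  shows "\<bar>A / c - 1\<bar> < h"
proof -
  have "A / c - 1 = (A - c) / c" using assms by (simp add: field_simps)
  then have "\<bar>A / c - 1\<bar> = \<bar>A - c\<bar> / c" using assms by (simp add: abs_div)
  then show ?thesis using assms by (simp add: divide_less_eq)
qed

lemma final_arith:
  fixes \<epsilon> a N D R s1 s2 A1 A2 A3 :: real
  assumes e: "0 < \<epsilon>" "\<epsilon> < 1" and pos: "a > 0" "N > 0" "D > 0" "R > 0" "s1 > 0" "s2 > 0"
    and h1: "\<bar>A1 - s1 * (D / a)\<bar> < \<epsilon>/5 * (D / a) * s1"
    and h2: "\<bar>A2 - s2 * (D / R)\<bar> < \<epsilon>/5 * (D / R) * s2"
    and h3: "\<bar>A3 - s2 * (N / R)\<bar> < \<epsilon>/5 * (N / R) * s2"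
  shows "(1 - \<epsilon>) * N \<le> a * (A1 / s1) / (A2 / A3) \<and> a * (A1 / s1) / (A2 / A3) \<le> (1 + \<epsilon>) * N"
proof -
  define x where "x = A1 / (s1 * (D / a))"
  define y where "y = A2 / (s2 * (D / R))"
  define z where "z = A3 / (s2 * (N / R))"
  have p1: "s1 * (D / a) > 0" "s2 * (D / R) > 0" "s2 * (N / R) > 0" using pos by auto
  have X: "\<bar>x - 1\<bar> < \<epsilon>/5" unfolding x_def using p1 h1 by (intro rel_helper) (auto simp: mult_ac)
  have Y: "\<bar>y - 1\<bar> < \<epsilon>/5" unfolding y_def using p1 h2 by (intro rel_helper) (auto simp: mult_ac)
  have Z: "\<bar>z - 1\<bar> < \<epsilon>/5" unfolding z_def using p1 h3 by (intro rel_helper) (auto simp: mult_ac)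
  have A1e: "A1 = x * (s1 * (D / a))" "A2 = y * (s2 * (D / R))" "A3 = z * (s2 * (N / R))"
    using p1 by (auto simp: x_def y_def z_def)
  define w where "w = x * z / y"
  have eq: "a * (A1 / s1) / (A2 / A3) = N * w"
    using pos unfolding A1e w_def by (simp add: field_simps)
  have wb: "1 - \<epsilon> \<le> w" "w \<le> 1 + \<epsilon>" using xyz_bound[OF e X Y Z] unfolding w_def by auto
  have "N * (1 - \<epsilon>) \<le> N * w" "N * w \<le> N * (1 + \<epsilon>)"
    using wb pos by (auto intro: mult_left_mono)
  moreover have "(1 - \<epsilon>) * N = N * (1 - \<epsilon>)" "(1 + \<epsilon>) * N = N * (1 + \<epsilon>)" by simp_all
  ultimately show ?thesis unfolding eq by linarith
qed

lemma bound_helper: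
  fixes X C \<epsilon> s Ef \<mu> :: real
  assumes "0 < X" "0 < C" "0 < \<epsilon>" "C * X / \<epsilon>^2 \<le> s" "Ef \<le> X * \<mu>^2" "\<mu> > 0"
  shows "Ef / (s * (\<epsilon>/5)^2 * \<mu>^2) \<le> 25 / C"
proof -
  have s: "s > 0" using assms by (smt (verit) divide_pos_pos mult_pos_pos zero_less_power)
  have "Ef / (s * (\<epsilon>/5)^2 * \<mu>^2) \<le> X * \<mu>^2 / (s * (\<epsilon>/5)^2 * \<mu>^2)"
    using assms s by (intro divide_right_mono) auto
  also have "\<dots> = 25 * X / (s * \<epsilon>^2)" using assms by (simp add: field_simps power2_eq_square)
  also have "\<dots> \<le> 25 / C"
  proof -
    have "C * X \<le> s * \<epsilon>^2" using assms(4) assms(3) by (simp add: divide_le_eq)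
    then show ?thesis using assms s by (simp add: divide_le_eq field_simps)
  qed
  finally show ?thesis .
qed



lemma card_swap:
  assumes "finite A" "finite B"
  shows "(\<Sum>a\<in>A. card {b\<in>B. P a b}) = (\<Sum>b\<in>B. card {a\<in>A. P a b})"
proof -
  have c: "card {x\<in>X. Q x} = (\<Sum>x\<in>X. if Q x then 1 else 0)" if "finite X" for X and Q :: "_ \<Rightarrow> bool"
    using that by (simp add: sum.If_cases Int_def)
  show ?thesis using assms by (simp add: c sum.swap[of _ A])
qed

lemma graph_facts:
  assumes finV: "finite V" and EV: "\<forall>u v. E u v \<longrightarrow> u \<in> V \<and> v \<in> V"
    and sym: "\<forall>u v. E u v \<longrightarrow> E v u" and ne: "layer2 V E L0 \<noteq> {}"
  shows "finite (layer1 V E L0)" "finite (layer_ge2 V E L0)" "layer1 V E L0 \<noteq> {}"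
    "layer_ge2 V E L0 \<noteq> {}"
    "(\<Sum>v\<in>layer1 V E L0. real (dplus V E L0 v)) = (\<Sum>v\<in>layer_ge2 V E L0. real (dminus V E L0 v))"
    "(\<Sum>v\<in>layer_ge2 V E L0. real (dminus V E L0 v)) > 0"
proof -
  let ?L1 = "layer1 V E L0" and ?L2 = "layer2 V E L0" and ?L = "layer_ge2 V E L0"
  have s1: "?L1 \<subseteq> V" unfolding layer1_def nbr_def by auto
  have s2: "?L \<subseteq> V" unfolding layer_ge2_def by auto
  have s12: "?L2 \<subseteq> ?L" unfolding layer2_def layer_ge2_def by auto
  show f1: "finite ?L1" using s1 finV finite_subset by blast
  show f2: "finite ?L" using s2 finV finite_subset by blast
  obtain w where w: "w \<in> ?L2" using ne by blast
  then obtain u where u: "u \<in> ?L1" "E u w" unfolding layer2_def by blast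
  show "?L1 \<noteq> {}" using u by blast
  show "?L \<noteq> {}" using w s12 by blast
  have e1: "{u \<in> ?L2. E v u} = {u \<in> ?L. E v u}" if "v \<in> ?L1" for v
    using that s12 unfolding layer2_def layer_ge2_def by auto
  have e2: "{v \<in> ?L1. E u v} = {v \<in> ?L1. E v u}" for u
    using sym by blast
  have "(\<Sum>v\<in>?L1. dplus V E L0 v) = (\<Sum>v\<in>?L1. card {u \<in> ?L. E v u})"
    unfolding dplus_def by (rule sum.cong) (simp_all add: e1)
  also have "\<dots> = (\<Sum>u\<in>?L. card {v \<in> ?L1. E v u})" by (rule card_swap[OF f1 f2])
  also have "\<dots> = (\<Sum>u\<in>?L. dminus V E L0 u)" unfolding dminus_def by (simp add: e2)
  finally have "(\<Sum>v\<in>?L1. dplus V E L0 v) = (\<Sum>u\<in>?L. dminus V E L0 u)" .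
  then show "(\<Sum>v\<in>?L1. real (dplus V E L0 v)) = (\<Sum>v\<in>?L. real (dminus V E L0 v))"
    by (metis of_nat_sum)
  have "{v \<in> ?L1. E w v} \<noteq> {}" using u sym by blast
  moreover have "finite {v \<in> ?L1. E w v}" using f1 by simp
  ultimately have "dminus V E L0 w > 0" unfolding dminus_def by (simp add: card_gt_0_iff)
  then have "real (dminus V E L0 w) > 0" by simp
  also have "real (dminus V E L0 w) \<le> (\<Sum>v\<in>?L. real (dminus V E L0 v))"
    using w s12 f2 by (intro member_le_sum) auto
  finally show "(\<Sum>v\<in>?L. real (dminus V E L0 v)) > 0" .
qed



lemma term_bound:
  fixes d M r rmin R :: real
  assumes "0 \<le> d" "d \<le> M" "0 < rmin" "rmin \<le> r" "0 < R"
  shows "(d / r)^2 * (r / R) \<le> M * d / (rmin * R)"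
proof -
  have r: "r > 0" using assms by linarith
  have "(d / r)^2 * (r / R) = (d * d) / (r * R)" using r by (simp add: power2_eq_square field_simps)
  also have "\<dots> \<le> (M * d) / (rmin * R)"
    using assms by (intro frac_le) (auto intro: mult_right_mono)
  finally show ?thesis .
qed

lemma main:
  fixes V :: "'a set" and E L0 and rs :: "'a \<Rightarrow> real" and Reach :: "'a pmf"
    and \<epsilon> C :: real and s1 s2 :: nat
  assumes finV: "finite V" and EV: "\<forall>u v. E u v \<longrightarrow> u \<in> V \<and> v \<in> V"
    and sym: "\<forall>u v. E u v \<longrightarrow> E v u" and ne: "layer2 V E L0 \<noteq> {}"
    and rspos: "\<forall>v\<in>layer_ge2 V E L0. rs v > 0"
    and reach: "\<forall>v\<in>layer_ge2 V E L0. pmf Reach v = rs v / (\<Sum>u\<in>layer_ge2 V E L0. rs u)"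
    and e: "0 < \<epsilon>" "\<epsilon> < 1" and Cpos: "C > 0"
    and hs1: "real s1 \<ge> C * max_of (\<lambda>v. real (dplus V E L0 v)) (layer1 V E L0)
                     / (\<epsilon>^2 * avg_of (\<lambda>v. real (dplus V E L0 v)) (layer1 V E L0))"
    and hs2: "real s2 \<ge> C * (avg_of rs (layer_ge2 V E L0) / min_of rs (layer_ge2 V E L0))
                     * max_of (\<lambda>v. real (dminus V E L0 v)) (layer_ge2 V E L0)
                     / (\<epsilon>^2 * avg_of (\<lambda>v. real (dminus V E L0 v)) (layer_ge2 V E L0))"
  shows "measure_pmf.prob (pair_pmf (iid_pmf s1 (pmf_of_set (layer1 V E L0))) (iid_pmf s2 Reach))
           {(S1, S2). (1 - \<epsilon>) * real (card (layer_ge2 V E L0))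
                        \<le> periphery_estimate V E L0 rs S1 S2
                      \<and> periphery_estimate V E L0 rs S1 S2
                        \<le> (1 + \<epsilon>) * real (card (layer_ge2 V E L0))}
           \<ge> 1 - 75 / C"
proof -
  let ?L1 = "layer1 V E L0" and ?L = "layer_ge2 V E L0"
  let ?dp = "\<lambda>v. real (dplus V E L0 v)" and ?dm = "\<lambda>v. real (dminus V E L0 v)"
  note gf = graph_facts[OF finV EV sym ne]
  have fL1: "finite ?L1" and fL: "finite ?L" and L1ne: "?L1 \<noteq> {}" and Lne: "?L \<noteq> {}"
    using gf by auto
  define a where "a = real (card ?L1)"
  define N where "N = real (card ?L)"
  define D where "D = (\<Sum>v\<in>?L. ?dm v)"
  define R where "R = (\<Sum>v\<in>?L. rs v)"
  define M1 where "M1 = max_of ?dp ?L1"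
  define M2 where "M2 = max_of ?dm ?L"
  define rmin where "rmin = min_of rs ?L"
  define \<eta> where "\<eta> = \<epsilon> / 5"
  have apos: "a > 0" unfolding a_def using fL1 L1ne by (simp add: card_gt_0_iff)
  have Npos: "N > 0" unfolding N_def using fL Lne by (simp add: card_gt_0_iff)
  have Dpos: "D > 0" unfolding D_def using gf by simp
  have sumdp: "(\<Sum>v\<in>?L1. ?dp v) = D" unfolding D_def using gf by simp
  have Rpos: "R > 0" unfolding R_def using rspos fL Lne by (intro sum_pos) auto
  have M1ge: "?dp v \<le> M1" if "v \<in> ?L1" for v
    unfolding M1_def max_of_def using that fL1 by (intro Max_ge) auto
  have M2ge: "?dm v \<le> M2" if "v \<in> ?L" for v
    unfolding M2_def max_of_def using that fL by (intro Max_ge) auto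
  have rminle: "rmin \<le> rs v" if "v \<in> ?L" for v
    unfolding rmin_def min_of_def using that fL by (intro Min_le) auto
  have "rmin \<in> rs ` ?L" unfolding rmin_def min_of_def using fL Lne by (intro Min_in) auto
  then have rminpos: "rmin > 0" using rspos by auto
  have "D \<le> (\<Sum>v\<in>?L1. M1)" unfolding sumdp[symmetric] using M1ge by (intro sum_mono) auto
  then have DM1: "D \<le> a * M1" by (simp add: a_def)
  have "D \<le> (\<Sum>v\<in>?L. M2)" unfolding D_def using M2ge by (intro sum_mono) auto
  then have DM2: "D \<le> N * M2" by (simp add: N_def)
  have M1pos: "M1 > 0"
  proof (rule ccontr)
    assume "\<not> M1 > 0" then have "a * M1 \<le> 0" using apos by (simp add: mult_nonneg_nonpos)
    then show False using DM1 Dpos by linarith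
  qed
  have M2pos: "M2 > 0"
  proof (rule ccontr)
    assume "\<not> M2 > 0" then have "N * M2 \<le> 0" using Npos by (simp add: mult_nonneg_nonpos)
    then show False using DM2 Dpos by linarith
  qed
  have avg1: "avg_of ?dp ?L1 = D / a" unfolding avg_of_def a_def using sumdp by simp
  have avg2: "avg_of ?dm ?L = D / N" unfolding avg_of_def N_def D_def by simp
  have avgr: "avg_of rs ?L = R / N" unfolding avg_of_def N_def R_def by simp

  have sumR: "(\<Sum>v\<in>?L. pmf Reach v) = 1"
  proof -
    have "(\<Sum>v\<in>?L. pmf Reach v) = (\<Sum>v\<in>?L. rs v / R)" using reach by (simp add: R_def)
    also have "\<dots> = 1" using Rpos by (simp add: sum_divide_distrib[symmetric] R_def)
    finally show ?thesis .
  qed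
  have setR: "set_pmf Reach \<subseteq> ?L"
  proof
    fix x assume x: "x \<in> set_pmf Reach"
    show "x \<in> ?L"
    proof (rule ccontr)
      assume nx: "x \<notin> ?L"
      have "measure_pmf.prob Reach (insert x ?L) = pmf Reach x + (\<Sum>v\<in>?L. pmf Reach v)"
        using fL nx by (simp add: measure_measure_pmf_finite)
      also have "\<dots> > 1" using sumR x by (simp add: pmf_positive)
      finally show False using measure_pmf.prob_le_1 by (simp add: not_le[symmetric])
    qed
  qed
  have finR: "finite (set_pmf Reach)" using setR fL finite_subset by blast
  have ER: "measure_pmf.expectation Reach g = (\<Sum>v\<in>?L. g v * (rs v / R))" for g :: "'a \<Rightarrow> real"
  proof -
    have "measure_pmf.expectation Reach g = (\<Sum>v\<in>?L. g v * pmf Reach v)"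
      by (rule integral_measure_pmf_real[OF fL]) (use setR in auto)
    also have "\<dots> = (\<Sum>v\<in>?L. g v * (rs v / R))" using reach by (simp add: R_def)
    finally show ?thesis .
  qed
  have finQ1: "finite (set_pmf (pmf_of_set ?L1))" using fL1 L1ne by simp
  have E1: "measure_pmf.expectation (pmf_of_set ?L1) g = (\<Sum>v\<in>?L1. g v) / a" for g :: "'a \<Rightarrow> real"
    using fL1 L1ne by (simp add: integral_pmf_of_set a_def)

  define \<mu>1 where "\<mu>1 = D / a"
  define X1 where "X1 = M1 * a / D"
  have mu1pos: "\<mu>1 > 0" unfolding \<mu>1_def using Dpos apos by simp
  have X1pos: "X1 > 0" unfolding X1_def using M1pos apos Dpos by simp
  have hs1': "C * X1 / \<epsilon>^2 \<le> real s1"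
  proof -
    have "C * X1 / \<epsilon>^2 = C * M1 / (\<epsilon>^2 * (D / a))"
      unfolding X1_def using apos Dpos e by (simp add: field_simps)
    then show ?thesis using hs1 unfolding avg1 M1_def by simp
  qed
  have s1pos: "real s1 > 0" using hs1' X1pos Cpos e
    by (smt (verit) divide_pos_pos mult_pos_pos zero_less_power)
  have Em1: "measure_pmf.expectation (pmf_of_set ?L1) ?dp = \<mu>1" unfolding E1 sumdp \<mu>1_def ..
  have Ef1: "measure_pmf.expectation (pmf_of_set ?L1) (\<lambda>v. (?dp v)^2) \<le> X1 * \<mu>1^2"
  proof -
    have "(\<Sum>v\<in>?L1. (?dp v)^2) \<le> (\<Sum>v\<in>?L1. M1 * ?dp v)"
      using M1ge by (intro sum_mono) (auto simp: power2_eq_square intro: mult_right_mono)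
    also have "\<dots> = M1 * D" by (simp add: sum_distrib_left[symmetric] sumdp)
    finally have "(\<Sum>v\<in>?L1. (?dp v)^2) / a \<le> M1 * D / a" using apos by (simp add: divide_right_mono)
    also have "M1 * D / a = X1 * \<mu>1^2" unfolding X1_def \<mu>1_def using apos Dpos
      by (simp add: field_simps power2_eq_square)
    finally show ?thesis unfolding E1 .
  qed
  define B1 where "B1 = {xs. xs \<notin> set_pmf (iid_pmf s1 (pmf_of_set ?L1)) \<or>
      \<eta> * \<mu>1 * real s1 \<le> \<bar>(\<Sum>v\<leftarrow>xs. ?dp v) - real s1 * \<mu>1\<bar>}"
  have pb1: "measure_pmf.prob (iid_pmf s1 (pmf_of_set ?L1)) B1 \<le> 25 / C"
  proof -
    have "measure_pmf.prob (iid_pmf s1 (pmf_of_set ?L1)) B1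
       \<le> measure_pmf.expectation (pmf_of_set ?L1) (\<lambda>v. (?dp v)^2) / (real s1 * \<eta>^2 * \<mu>1^2)"
      unfolding B1_def using iid_dev[OF finQ1 Em1[symmetric] mu1pos, of \<eta> s1] e s1pos
      by (simp add: \<eta>_def)
    also have "\<dots> \<le> 25 / C" unfolding \<eta>_def
      by (rule bound_helper[OF X1pos Cpos e(1) hs1' Ef1 mu1pos])
    finally show ?thesis .
  qed

  define \<mu>2 where "\<mu>2 = D / R"
  define X2 where "X2 = M2 * R / (rmin * D)"
  have mu2pos: "\<mu>2 > 0" unfolding \<mu>2_def using Dpos Rpos by simp
  have X2pos: "X2 > 0" unfolding X2_def using M2pos Rpos Dpos rminpos by simp
  have hs2': "C * X2 / \<epsilon>^2 \<le> real s2"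
  proof -
    have "C * X2 / \<epsilon>^2 = C * ((R / N) / rmin) * M2 / (\<epsilon>^2 * (D / N))"
      unfolding X2_def using Npos Dpos e rminpos by (simp add: field_simps)
    then show ?thesis using hs2 unfolding avg2 avgr M2_def rmin_def by simp
  qed
  have s2pos: "real s2 > 0" using hs2' X2pos Cpos e
    by (smt (verit) divide_pos_pos mult_pos_pos zero_less_power)
  have Em2: "measure_pmf.expectation Reach (\<lambda>v. ?dm v / rs v) = \<mu>2"
  proof -
    have "measure_pmf.expectation Reach (\<lambda>v. ?dm v / rs v) = (\<Sum>v\<in>?L. ?dm v / R)"
      unfolding ER using rspos by (intro sum.cong) auto
    also have "\<dots> = \<mu>2" unfolding \<mu>2_def D_def by (simp add: sum_divide_distrib)
    finally show ?thesis .
  qed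
  have Ef2: "measure_pmf.expectation Reach (\<lambda>v. (?dm v / rs v)^2) \<le> X2 * \<mu>2^2"
  proof -
    have "measure_pmf.expectation Reach (\<lambda>v. (?dm v / rs v)^2) \<le> (\<Sum>v\<in>?L. M2 * ?dm v / (rmin * R))"
      unfolding ER using M2ge rminle rminpos Rpos by (intro sum_mono term_bound) auto
    also have "\<dots> = M2 * D / (rmin * R)" unfolding D_def
      by (simp add: sum_divide_distrib[symmetric] sum_distrib_left[symmetric])
    also have "\<dots> = X2 * \<mu>2^2" unfolding X2_def \<mu>2_def using Rpos Dpos rminpos
      by (simp add: field_simps power2_eq_square)
    finally show ?thesis .
  qed
  define B2 where "B2 = {xs. xs \<notin> set_pmf (iid_pmf s2 Reach) \<or>
      \<eta> * \<mu>2 * real s2 \<le> \<bar>(\<Sum>v\<leftarrow>xs. ?dm v / rs v) - real s2 * \<mu>2\<bar>}"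
  have pb2: "measure_pmf.prob (iid_pmf s2 Reach) B2 \<le> 25 / C"
  proof -
    have "measure_pmf.prob (iid_pmf s2 Reach) B2
       \<le> measure_pmf.expectation Reach (\<lambda>v. (?dm v / rs v)^2) / (real s2 * \<eta>^2 * \<mu>2^2)"
      unfolding B2_def using iid_dev[OF finR Em2[symmetric] mu2pos, of \<eta> s2] e s2pos
      by (simp add: \<eta>_def)
    also have "\<dots> \<le> 25 / C" unfolding \<eta>_def
      by (rule bound_helper[OF X2pos Cpos e(1) hs2' Ef2 mu2pos])
    finally show ?thesis .
  qed

  define \<mu>3 where "\<mu>3 = N / R"
  define X3 where "X3 = R / (rmin * N)"
  have mu3pos: "\<mu>3 > 0" unfolding \<mu>3_def using Npos Rpos by simp
  have X3pos: "X3 > 0" unfolding X3_def using Npos Rpos rminpos by simp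
  have X32: "X3 \<le> X2"
  proof -
    have "X3 = R / rmin * (1 / N)" unfolding X3_def by simp
    also have "\<dots> \<le> R / rmin * (M2 / D)"
      using DM2 Npos Dpos Rpos rminpos by (intro mult_left_mono) (auto simp: field_simps)
    also have "\<dots> = X2" unfolding X2_def by simp
    finally show ?thesis .
  qed
  have hs3': "C * X3 / \<epsilon>^2 \<le> real s2"
  proof -
    have "C * X3 / \<epsilon>^2 \<le> C * X2 / \<epsilon>^2" using X32 Cpos e
      by (intro divide_right_mono mult_left_mono) auto
    then show ?thesis using hs2' by linarith
  qed
  have Em3: "measure_pmf.expectation Reach (\<lambda>v. 1 / rs v) = \<mu>3"
  proof -
    have "measure_pmf.expectation Reach (\<lambda>v. 1 / rs v) = (\<Sum>v\<in>?L. 1 / R)"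
      unfolding ER using rspos by (intro sum.cong) auto
    also have "\<dots> = \<mu>3" unfolding \<mu>3_def N_def by simp
    finally show ?thesis .
  qed
  have Ef3: "measure_pmf.expectation Reach (\<lambda>v. (1 / rs v)^2) \<le> X3 * \<mu>3^2"
  proof -
    have "measure_pmf.expectation Reach (\<lambda>v. (1 / rs v)^2) \<le> (\<Sum>v\<in>?L. 1 * 1 / (rmin * R))"
      unfolding ER using rminle rminpos Rpos by (intro sum_mono term_bound) auto
    also have "\<dots> = N / (rmin * R)" unfolding N_def by simp
    also have "\<dots> = X3 * \<mu>3^2" unfolding X3_def \<mu>3_def using Rpos Npos rminpos
      by (simp add: field_simps power2_eq_square)
    finally show ?thesis .
  qed
  define B3 where "B3 = {xs. xs \<notin> set_pmf (iid_pmf s2 Reach) \<or>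
      \<eta> * \<mu>3 * real s2 \<le> \<bar>(\<Sum>v\<leftarrow>xs. 1 / rs v) - real s2 * \<mu>3\<bar>}"
  have pb3: "measure_pmf.prob (iid_pmf s2 Reach) B3 \<le> 25 / C"
  proof -
    have "measure_pmf.prob (iid_pmf s2 Reach) B3
       \<le> measure_pmf.expectation Reach (\<lambda>v. (1 / rs v)^2) / (real s2 * \<eta>^2 * \<mu>3^2)"
      unfolding B3_def using iid_dev[OF finR Em3[symmetric] mu3pos, of \<eta> s2] e s2pos
      by (simp add: \<eta>_def)
    also have "\<dots> \<le> 25 / C" unfolding \<eta>_def
      by (rule bound_helper[OF X3pos Cpos e(1) hs3' Ef3 mu3pos])
    finally show ?thesis .
  qed

  let ?Q1 = "iid_pmf s1 (pmf_of_set ?L1)" and ?Q2 = "iid_pmf s2 Reach"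
  let ?P = "pair_pmf ?Q1 ?Q2"
  let ?G = "{(S1, S2). (1 - \<epsilon>) * real (card ?L) \<le> periphery_estimate V E L0 rs S1 S2
                      \<and> periphery_estimate V E L0 rs S1 S2 \<le> (1 + \<epsilon>) * real (card ?L)}"
  define U where "U = fst -` B1 \<union> snd -` B2 \<union> snd -` B3"
  have incl: "UNIV - U \<subseteq> ?G"
  proof
    fix p assume p: "p \<in> UNIV - U"
    obtain S1 S2 where pe: "p = (S1, S2)" by (cases p)
    have n1: "S1 \<notin> B1" and n2: "S2 \<notin> B2" and n3: "S2 \<notin> B3" using p unfolding U_def pe by auto
    have len: "length S1 = s1" using n1 set_iid unfolding B1_def by blast
    have h1: "\<bar>(\<Sum>v\<leftarrow>S1. ?dp v) - real s1 * (D / a)\<bar> < \<epsilon>/5 * (D / a) * real s1"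
      using n1 unfolding B1_def \<eta>_def \<mu>1_def by auto
    have h2: "\<bar>(\<Sum>v\<leftarrow>S2. ?dm v / rs v) - real s2 * (D / R)\<bar> < \<epsilon>/5 * (D / R) * real s2"
      using n2 unfolding B2_def \<eta>_def \<mu>2_def by auto
    have h3: "\<bar>(\<Sum>v\<leftarrow>S2. 1 / rs v) - real s2 * (N / R)\<bar> < \<epsilon>/5 * (N / R) * real s2"
      using n3 unfolding B3_def \<eta>_def \<mu>3_def by auto
    have "periphery_estimate V E L0 rs S1 S2 = a * ((\<Sum>v\<leftarrow>S1. ?dp v) / real s1) /
        ((\<Sum>v\<leftarrow>S2. ?dm v / rs v) / (\<Sum>v\<leftarrow>S2. 1 / rs v))"
      unfolding periphery_estimate_def Let_def a_def len ..
    then show "p \<in> ?G" unfolding pe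
      using final_arith[OF e apos Npos Dpos Rpos s1pos s2pos h1 h2 h3] by (simp add: N_def)
  qed
  have m1: "measure_pmf.prob ?P (fst -` B1) = measure_pmf.prob ?Q1 B1"
    using measure_map_pmf[of fst ?P B1] by (simp add: map_fst_pair_pmf)
  have m2: "measure_pmf.prob ?P (snd -` B2) = measure_pmf.prob ?Q2 B2"
    using measure_map_pmf[of snd ?P B2] by (simp add: map_snd_pair_pmf)
  have m3: "measure_pmf.prob ?P (snd -` B3) = measure_pmf.prob ?Q2 B3"
    using measure_map_pmf[of snd ?P B3] by (simp add: map_snd_pair_pmf)
  have "measure_pmf.prob ?P U \<le> measure_pmf.prob ?P (fst -` B1 \<union> snd -` B2) + measure_pmf.prob ?P (snd -` B3)"
    unfolding U_def by (rule measure_Un_le) auto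
  also have "measure_pmf.prob ?P (fst -` B1 \<union> snd -` B2) \<le> measure_pmf.prob ?P (fst -` B1) + measure_pmf.prob ?P (snd -` B2)"
    by (rule measure_Un_le) auto
  finally have "measure_pmf.prob ?P U \<le> 75 / C" using pb1 pb2 pb3 unfolding m1 m2 m3 by linarith
  moreover have "measure_pmf.prob ?P (UNIV - U) = 1 - measure_pmf.prob ?P U"
    using measure_pmf.prob_compl[of U ?P] by simp
  moreover have "measure_pmf.prob ?P (UNIV - U) \<le> measure_pmf.prob ?P ?G"
    using incl by (intro measure_pmf.finite_measure_mono) auto
  ultimately show ?thesis by linarith
qed

theorem theoremA2:
  "\<forall>\<delta>::real. 0 < \<delta> \<and> \<delta> < 1 \<longrightarrow>
    (\<exists>C::real. C > 0 \<and>
      (\<forall>(V::'a set) E L0 (rs::'a \<Rightarrow> real) (Reach::'a pmf) (\<epsilon>::real) (s1::nat) (s2::nat).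
         finite V \<and> (\<forall>u v. E u v \<longrightarrow> u \<in> V \<and> v \<in> V) \<and> (\<forall>u v. E u v \<longrightarrow> E v u)
         \<and> (\<forall>v. \<not> E v v) \<and> L0 \<subseteq> V \<and> layer2 V E L0 \<noteq> {}
         \<and> (\<forall>v\<in>layer_ge2 V E L0. rs v > 0)
         \<and> (\<forall>v\<in>layer_ge2 V E L0. pmf Reach v = rs v / (\<Sum>u\<in>layer_ge2 V E L0. rs u))
         \<and> 0 < \<epsilon> \<and> \<epsilon> < 1
         \<and> real s1 \<ge> C * max_of (\<lambda>v. real (dplus V E L0 v)) (layer1 V E L0)
                     / (\<epsilon>^2 * avg_of (\<lambda>v. real (dplus V E L0 v)) (layer1 V E L0))
         \<and> real s2 \<ge> C * (avg_of rs (layer_ge2 V E L0) / min_of rs (layer_ge2 V E L0))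
                     * max_of (\<lambda>v. real (dminus V E L0 v)) (layer_ge2 V E L0)
                     / (\<epsilon>^2 * avg_of (\<lambda>v. real (dminus V E L0 v)) (layer_ge2 V E L0))
         \<longrightarrow>
         measure_pmf.prob (pair_pmf (iid_pmf s1 (pmf_of_set (layer1 V E L0))) (iid_pmf s2 Reach))
           {(S1, S2). (1 - \<epsilon>) * real (card (layer_ge2 V E L0))
                        \<le> periphery_estimate V E L0 rs S1 S2
                      \<and> periphery_estimate V E L0 rs S1 S2
                        \<le> (1 + \<epsilon>) * real (card (layer_ge2 V E L0))}
           \<ge> 1 - \<delta>))"
    apply (intro allI impI)
  subgoal for \<delta>
    apply (rule exI[of _ "75 / \<delta>"])
    apply (intro conjI allI impI)
    subgoal by simp
    subgoal premises H for V E L0 rs Reach \<epsilon> s1 s2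
    proof -
      have Cp: "75 / \<delta> > 0" using H by simp
      have "1 - 75 / (75 / \<delta>) = 1 - \<delta>" using H by simp
      then show ?thesis using main[of V E L0 rs Reach \<epsilon> "75 / \<delta>" s1 s2] H Cp by auto
    qed
    done
  done

end
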